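(* Let $\mathbf{X}$ be $\mathbb{R}P^n$ ($n\ge2$) or $\mathrm{Ein}^{p,q}$ ($\min(p,q)\ge2$), $M$ a compact $(G_{\mathbf{X}},\mathbf{X})$-manifold with universal cover $\pi:\tilde M\to M$ and developing map $\mathfrak{D}:\tilde M\to\tilde{\mathbf{X}}$. If $V \subset \tilde{M}$ is a relatively compact maximal chart, then there is an open neighborhood $V' \supset \overline{V}$ of the closure of $V$ in $\tilde M$ in restriction to which $\mathfrak{D}$ is injective.
   Context: $G_{\mathbf{X}}=\mathrm{PGL}(n+1,\mathbb{R})$ resp. $\mathrm{PO}(p+1,q+1)$; $\tilde{\mathbf{X}}$ is $\mathbb{S}^n$ resp. $\widetilde{\mathrm{Ein}}^{p,q}=\mathbb{S}^p\times\mathbb{S}^q$ (isotropic vectors of Euclidean norm 1 in $\mathbb{R}^{p+1,q+1}$), covering $\mathbf{X}$ via $\pi_{\mathbf{X}}$. A hemisphere is $\mathbb{S}^n\cap\{\ell>0\}$, $\ell$ a nonzero linear form; a Minkowski patch of $\widetilde{\mathrm{Ein}}^{p,q}$ is a connected component of $\pi_{\mathbf{X}}^{-1}(\{[w]:B(v,w)\ne0\})$, $v$ isotropic. A maximal chart is an open subset $V\subset\tilde M$ on which both $\pi$ and $\mathfrak{D}$ are injective and such that $\mathfrak{D}(V)$ is a hemisphere of $\mathbb{S}^n$ (projective case) or a Minkowski patch of $\widetilde{\mathrm{Ein}}^{p,q}$ (conformal case). *)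

theory Defs
  imports "HOL-Analysis.Analysis"
begin

definition covering_map :: "'a topology \<Rightarrow> ('a \<Rightarrow> 'b) \<Rightarrow> 'b topology \<Rightarrow> bool" where
  "covering_map E p B \<longleftrightarrow>
     continuous_map E B p \<and> p ` topspace E = topspace B \<and>
     (\<forall>x \<in> topspace B. \<exists>U. openin B U \<and> x \<in> U \<and>
        (\<exists>\<V>. \<Union>\<V> = topspace E \<inter> p -` U \<and> (\<forall>W \<in> \<V>. openin E W) \<and> pairwise disjnt \<V> \<and>
             (\<forall>W \<in> \<V>. homeomorphic_map (subtopology E W) (subtopology B U) p)))"

definition local_homeo_map :: "'a topology \<Rightarrow> 'b topology \<Rightarrow> ('a \<Rightarrow> 'b) \<Rightarrow> bool" where
  "local_homeo_map E Y f \<longleftrightarrow>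
     continuous_map E Y f \<and>
     (\<forall>x \<in> topspace E. \<exists>U. openin E U \<and> x \<in> U \<and> openin Y (f ` U) \<and>
          homeomorphic_map (subtopology E U) (subtopology Y (f ` U)) f)"

definition simply_connected_sp :: "'a topology \<Rightarrow> bool" where
  "simply_connected_sp X \<longleftrightarrow>
     path_connected_space X \<and>
     (\<forall>g. pathin X g \<and> g 0 = g 1 \<longrightarrow>
        homotopic_with (\<lambda>h. h 0 = g 0 \<and> h 1 = g 1) (top_of_set {0..1}) X g (\<lambda>_. g 0))"

text \<open>Data: universal cover Mt of the compact (G,X)-manifold M with covering map p and
developing map D into the model Xt (a subset of a Euclidean space), where Gact is the
group of transformations of Xt lifting G_X.\<close>

definition dev_data ::
  "'m topology \<Rightarrow> 'b topology \<Rightarrow> ('m \<Rightarrow> 'b) \<Rightarrow> ('m \<Rightarrow> 'v::real_normed_vector) \<Rightarrow> 'v set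
    \<Rightarrow> ('v \<Rightarrow> 'v) set \<Rightarrow> bool" where
  "dev_data Mt M p D Xt Gact \<longleftrightarrow>
     compact_space M \<and> connected_space M \<and> Hausdorff_space M \<and> Hausdorff_space Mt \<and>
     covering_map Mt p M \<and> simply_connected_sp Mt \<and>
     local_homeo_map Mt (top_of_set Xt) D \<and>
     (\<forall>\<gamma>. homeomorphic_map Mt Mt \<gamma> \<and> (\<forall>x \<in> topspace Mt. p (\<gamma> x) = p x) \<longrightarrow>
        (\<exists>g \<in> Gact. \<forall>x \<in> topspace Mt. D (\<gamma> x) = g (D x)))"

definition max_chart ::
  "'m topology \<Rightarrow> ('m \<Rightarrow> 'b) \<Rightarrow> ('m \<Rightarrow> 'v) \<Rightarrow> 'v set set \<Rightarrow> 'm set \<Rightarrow> bool" where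
  "max_chart Mt p D Patches V \<longleftrightarrow>
     openin Mt V \<and> inj_on p V \<and> inj_on D V \<and> D ` V \<in> Patches"

section \<open>Projective model: S^n in R^(n+1), group GL(n+1) acting by normalisation\<close>

definition proj_act :: "real^'n^'n \<Rightarrow> real^'n \<Rightarrow> real^'n" where
  "proj_act A v = inverse (norm (A *v v)) *\<^sub>R (A *v v)"

definition proj_group :: "(real^'n \<Rightarrow> real^'n) set" where
  "proj_group = {proj_act A | A. invertible A}"

definition hemispheres :: "(real^'n) set set" where
  "hemispheres = {{v \<in> sphere 0 1. l v > (0::real)} | l. linear l \<and> l \<noteq> (\<lambda>_. 0)}"

section \<open>Conformal model: Ein^{p,q} lifted to S^p x S^q in R^{p+1,q+1}\<close>

text \<open>Coordinates indexed by 'a + 'b with CARD('a) = p+1, CARD('b) = q+1.\<close>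

definition ein_form :: "real^('a::finite + 'b::finite) \<Rightarrow> real^('a + 'b) \<Rightarrow> real" where
  "ein_form v w = (\<Sum>i \<in> range Inl. v $ i * w $ i) - (\<Sum>i \<in> range Inr. v $ i * w $ i)"

definition ein_tilde :: "(real^('a::finite + 'b::finite)) set" where
  "ein_tilde = {v. ein_form v v = 0 \<and> norm v = 1}"

definition ein_group :: "(real^('a::finite + 'b::finite) \<Rightarrow> real^('a + 'b)) set" where
  "ein_group = {proj_act A | A. \<forall>v w. ein_form (A *v v) (A *v w) = ein_form v w}"

definition minkowski_patches :: "(real^('a::finite + 'b::finite)) set set" where
  "minkowski_patches =
     (\<Union>v \<in> {v. v \<noteq> 0 \<and> ein_form v v = 0}. components {w \<in> ein_tilde. ein_form v w \<noteq> 0})"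

end

theory Submission
  imports Defs
begin

lemma lh_cont: "local_homeo_map E Y f \<Longrightarrow> continuous_map E Y f"
  by (simp add: local_homeo_map_def)

lemma lh_open:
  assumes lh: "local_homeo_map E Y f" and W: "openin E W"
  shows "openin Y (f ` W)"
proof (rule openin_subopen[THEN iffD2], intro ballI)
  fix y assume "y \<in> f ` W"
  then obtain x where x: "x \<in> W" "y = f x" by auto
  then have "x \<in> topspace E" using W openin_subset by blast
  then obtain U where U: "openin E U" "x \<in> U" "openin Y (f ` U)"
      "homeomorphic_map (subtopology E U) (subtopology Y (f ` U)) f"
    using lh unfolding local_homeo_map_def by blast
  have "openin (subtopology E U) (W \<inter> U)"
    unfolding openin_subtopology using W by blast
  then have "openin (subtopology Y (f ` U)) (f ` (W \<inter> U))"
    using homeomorphic_map_openness[OF U(4)] U(1) openin_subset by (metis inf_le2 topspace_subtopology_subset)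
  then have "openin Y (f ` (W \<inter> U))"
    using U(3) openin_trans_full by blast
  then show "\<exists>T. openin Y T \<and> y \<in> T \<and> T \<subseteq> f ` W"
    using x U by blast
qed

lemma lh_inj:
  assumes lh: "local_homeo_map E Y f" and x: "x \<in> topspace E"
  shows "\<exists>U. openin E U \<and> x \<in> U \<and> inj_on f U"
proof -
  obtain U where U: "openin E U" "x \<in> U" 
      "homeomorphic_map (subtopology E U) (subtopology Y (f ` U)) f"
    using lh x unfolding local_homeo_map_def by blast
  then have "inj_on f (topspace (subtopology E U))"
    using homeomorphic_imp_injective_map by blast
  then show ?thesis using U openin_subset by (metis topspace_subtopology_subset)
qed

lemma closure_ofD:
  assumes "x \<in> X closure_of S" "x \<in> T" "openin X T"
  shows "\<exists>y\<in>S. y \<in> T"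
  using assms unfolding in_closure_of by blast

lemma claimA:
  assumes Haus: "Hausdorff_space Mt" and lh: "local_homeo_map Mt (top_of_set X) D"
    and V: "openin Mt V" "inj_on D V"
    and w: "w \<in> Mt closure_of V" and v: "v \<in> V" "D w = D v"
  shows "w \<in> V"
proof (rule ccontr)
  assume wV: "w \<notin> V"
  then have ne: "w \<noteq> v" using v by auto
  have wt: "w \<in> topspace Mt" using w unfolding in_closure_of by blast
  have vt: "v \<in> topspace Mt" using v V openin_subset by blast
  obtain Uw Uv where U: "openin Mt Uw" "openin Mt Uv" "w \<in> Uw" "v \<in> Uv" "disjnt Uw Uv"
    using Haus wt vt ne unfolding Hausdorff_space_def by blast
  obtain U0 where U0: "openin Mt U0" "v \<in> U0" "inj_on D U0"
    using lh_inj[OF lh vt] by blast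
  define U1 where "U1 = U0 \<inter> V \<inter> Uv"
  have oU1: "openin Mt U1" unfolding U1_def using U0 V U by blast
  have oT: "openin (top_of_set X) (D ` U1)" using lh_open[OF lh oU1] .
  define G where "G = Uw \<inter> {x \<in> topspace Mt. D x \<in> D ` U1}"
  have oG: "openin Mt G" unfolding G_def
    using U(1) openin_continuous_map_preimage[OF lh_cont[OF lh] oT] by blast
  have "w \<in> G" unfolding G_def using U v U0 wt by (auto simp: U1_def)
  then obtain z where z: "z \<in> V" "z \<in> G" using w oG unfolding in_closure_of by blast
  then obtain z' where z': "z' \<in> U1" "D z = D z'" unfolding G_def by auto
  then have "z = z'" using V(2) z U1_def by (auto dest: inj_onD)
  then show False using z z' U unfolding G_def U1_def disjnt_def by auto
qed

lemma inj_closure: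
  assumes Haus: "Hausdorff_space Mt" and lh: "local_homeo_map Mt (top_of_set X) D"
    and V: "openin Mt V" "inj_on D V"
    and lc: "\<And>z W. z \<in> closure (D ` V) - D ` V \<Longrightarrow> z \<in> X \<Longrightarrow> openin (top_of_set X) W \<Longrightarrow> z \<in> W
       \<Longrightarrow> \<exists>N. openin (top_of_set X) N \<and> z \<in> N \<and> N \<subseteq> W \<and> connected (N \<inter> D ` V)"
  shows "inj_on D (Mt closure_of V)"
proof (rule inj_onI)
  let ?K = "Mt closure_of V"
  let ?H = "D ` V"
  have cont: "continuous_map Mt (top_of_set X) D" using lh_cont[OF lh] .
  fix x y assume x: "x \<in> ?K" and y: "y \<in> ?K" and eq: "D x = D y"
  show "x = y"
  proof (rule ccontr)
    assume ne: "x \<noteq> y"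
    have xt: "x \<in> topspace Mt" using x unfolding in_closure_of by blast
    have yt: "y \<in> topspace Mt" using y unfolding in_closure_of by blast
    have zX: "D x \<in> X" using cont xt by (auto simp: continuous_map_def)
    have zH: "D x \<notin> ?H"
    proof
      assume "D x \<in> ?H"
      then obtain v where v: "v \<in> V" "D x = D v" by auto
      have "x \<in> V" using claimA[OF Haus lh V x v] .
      moreover have "y \<in> V" using claimA[OF Haus lh V y v(1)] v eq by simp
      ultimately show False using ne eq V(2) by (auto dest: inj_onD)
    qed
    have "D ` ?K \<subseteq> (top_of_set X) closure_of ?H"
      using continuous_map_image_closure_subset[OF cont] .
    also have "\<dots> \<subseteq> closure ?H"
      using closure_of_subtopology_subset[of euclidean X ?H] by (simp add: euclidean_closure_of)
    finally have zcl: "D x \<in> closure ?H" using x by blast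
    obtain Ux Uy where U: "openin Mt Ux" "openin Mt Uy" "x \<in> Ux" "y \<in> Uy" "disjnt Ux Uy"
      using Haus xt yt ne unfolding Hausdorff_space_def by blast
    obtain U0x where U0x: "openin Mt U0x" "x \<in> U0x" "inj_on D U0x"
      using lh_inj[OF lh xt] by blast
    obtain U0y where U0y: "openin Mt U0y" "y \<in> U0y" "inj_on D U0y"
      using lh_inj[OF lh yt] by blast
    define Ux' where "Ux' = Ux \<inter> U0x"
    define Uy' where "Uy' = Uy \<inter> U0y"
    have oUx': "openin Mt Ux'" "x \<in> Ux'" "inj_on D Ux'"
      using U U0x unfolding Ux'_def by (auto intro: inj_on_subset)
    have oUy': "openin Mt Uy'" "y \<in> Uy'" "inj_on D Uy'"
      using U U0y unfolding Uy'_def by (auto intro: inj_on_subset)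
    define Wz where "Wz = D ` Ux' \<inter> D ` Uy'"
    have oO: "openin (top_of_set X) Wz" "D x \<in> Wz"
      unfolding Wz_def
    proof -
      show "openin (top_of_set X) (D ` Ux' \<inter> D ` Uy')"
        using lh_open[OF lh oUx'(1)] lh_open[OF lh oUy'(1)] by (rule openin_Int)
      show "D x \<in> D ` Ux' \<inter> D ` Uy'" using oUx'(2) oUy'(2) eq by (metis IntI image_eqI)
    qed
    obtain N where N: "openin (top_of_set X) N" "D x \<in> N" "N \<subseteq> Wz" "connected (N \<inter> ?H)"
      using lc[OF _ zX oO] zcl zH by blast
    have key: "N \<inter> ?H \<subseteq> D ` (U' \<inter> V) \<and> N \<inter> ?H \<noteq> {}"
      if U': "openin Mt U'" "inj_on D U'" "N \<subseteq> D ` U'" and p: "p \<in> U'" "p \<in> ?K" "D p = D x"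
      for U' p
    proof -
      define A where "A = D ` (U' \<inter> V)"
      define C where "C = \<Union>{D ` (G \<inter> U') | G. openin Mt G \<and> G \<inter> V = {}}"
      have oA: "openin (top_of_set X) A" unfolding A_def using lh_open[OF lh] U'(1) V(1) by blast
      have oC: "openin (top_of_set X) C" unfolding C_def
        by (rule openin_Union) (use lh_open[OF lh] U'(1) in blast)
      obtain A0 where A0: "open A0" "A = X \<inter> A0" using oA by (auto simp: openin_open)
      obtain C0 where C0: "open C0" "C = X \<inter> C0" using oC by (auto simp: openin_open)
      have SX: "N \<inter> ?H \<subseteq> X" using N(1) openin_subset by fastforce
      have cov: "N \<inter> ?H \<subseteq> A \<union> C"
      proof
        fix h assume h: "h \<in> N \<inter> ?H"
        then obtain u where u: "u \<in> U'" "h = D u" using U'(3) by blast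
        show "h \<in> A \<union> C"
        proof (cases "u \<in> V")
          case True then show ?thesis using u by (auto simp: A_def)
        next
          case False
          have ut: "u \<in> topspace Mt" using u U'(1) openin_subset by blast
          have "u \<notin> ?K"
          proof
            assume "u \<in> ?K"
            moreover obtain v where "v \<in> V" "D u = D v" using h u by auto
            ultimately show False using claimA[OF Haus lh V] False by blast
          qed
          then obtain G where G: "u \<in> G" "openin Mt G" "\<forall>y. y \<in> V \<longrightarrow> y \<notin> G"
            using ut unfolding in_closure_of by blast
          then have "h \<in> D ` (G \<inter> U')" using u by auto
          then show ?thesis unfolding C_def using G by blast
        qed
      qed
      have disj: "A \<inter> C \<inter> (N \<inter> ?H) = {}"
      proof (rule ccontr)
        assume "A \<inter> C \<inter> (N \<inter> ?H) \<noteq> {}"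
        then obtain h where "h \<in> A" "h \<in> C" by blast
        then obtain a g G where "a \<in> U' \<inter> V" "h = D a" "g \<in> G \<inter> U'" "h = D g" "G \<inter> V = {}"
          unfolding A_def C_def by blast
        then show False using U'(2) by (auto dest: inj_onD)
      qed
      have pt: "p \<in> topspace Mt" using p U'(1) openin_subset by blast
      have oP: "openin Mt (U' \<inter> {q \<in> topspace Mt. D q \<in> N})"
        using U'(1) openin_continuous_map_preimage[OF cont N(1)] by blast
      have pin: "p \<in> U' \<inter> {q \<in> topspace Mt. D q \<in> N}" using p(1,3) pt N(2) by simp
      obtain v where "v \<in> V" "v \<in> U' \<inter> {q \<in> topspace Mt. D q \<in> N}"
        using closure_ofD[OF p(2) pin oP] by blast
      then have v: "v \<in> V" "v \<in> U'" "D v \<in> N" by auto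
      then have AS: "A \<inter> (N \<inter> ?H) \<noteq> {}" unfolding A_def by blast
      have "A0 \<inter> C0 \<inter> (N \<inter> ?H) = {}" using disj SX A0 C0 by blast
      moreover have "N \<inter> ?H \<subseteq> A0 \<union> C0" using cov A0 C0 by blast
      ultimately have "A0 \<inter> (N \<inter> ?H) = {} \<or> C0 \<inter> (N \<inter> ?H) = {}"
        using connectedD[OF N(4) A0(1) C0(1)] by blast
      moreover have "A0 \<inter> (N \<inter> ?H) \<noteq> {}" using AS A0 by blast
      ultimately have "C0 \<inter> (N \<inter> ?H) = {}" by blast
      then have "N \<inter> ?H \<subseteq> A" using cov C0 SX by blast
      then show ?thesis using AS unfolding A_def by blast
    qed
    have kx: "N \<inter> ?H \<subseteq> D ` (Ux' \<inter> V)" "N \<inter> ?H \<noteq> {}"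
      using key[OF oUx'(1) oUx'(3) _ oUx'(2) x refl] N(3) unfolding Wz_def by blast+
    have ky: "N \<inter> ?H \<subseteq> D ` (Uy' \<inter> V)"
      using key[OF oUy'(1) oUy'(3) _ oUy'(2) y eq[symmetric]] N(3) unfolding Wz_def by blast
    obtain h where h: "h \<in> N \<inter> ?H" using kx(2) by blast
    then have "h \<in> D ` (Ux' \<inter> V)" "h \<in> D ` (Uy' \<inter> V)" using kx(1) ky by (auto simp del: Int_iff)
    then obtain a b where "a \<in> Ux' \<inter> V" "b \<in> Uy' \<inter> V" "D a = D b"
      by (metis imageE)
    then have "a = b" using V(2) by (auto dest: inj_onD)
    then show False using \<open>a \<in> Ux' \<inter> V\<close> \<open>b \<in> Uy' \<inter> V\<close> U(5)
      unfolding Ux'_def Uy'_def disjnt_def by auto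
  qed
qed

lemma inj_nbhd:
  fixes X :: "'b::metric_space set"
  assumes Haus: "Hausdorff_space Mt" and lh: "local_homeo_map Mt (top_of_set X) D"
    and K: "compactin Mt K" "inj_on D K"
  shows "\<exists>V'. openin Mt V' \<and> K \<subseteq> V' \<and> inj_on D V'"
proof -
  have cont: "continuous_map Mt (top_of_set X) D" using lh_cont[OF lh] .
  define W where "W = {(a,b). a \<in> topspace Mt \<and> b \<in> topspace Mt \<and> (a = b \<or> D a \<noteq> D b)}"
  have oW: "openin (prod_topology Mt Mt) W"
  proof (rule openin_subopen[THEN iffD2], intro ballI)
    fix ab assume "ab \<in> W"
    then obtain a b where ab: "ab = (a,b)" "a \<in> topspace Mt" "b \<in> topspace Mt" "a = b \<or> D a \<noteq> D b"
      unfolding W_def by auto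
    show "\<exists>T. openin (prod_topology Mt Mt) T \<and> ab \<in> T \<and> T \<subseteq> W"
    proof (cases "a = b")
      case True
      obtain U where U: "openin Mt U" "a \<in> U" "inj_on D U" using lh_inj[OF lh ab(2)] by blast
      have "U \<times> U \<subseteq> W" unfolding W_def using U openin_subset[OF U(1)] by (auto dest: inj_onD)
      moreover have "openin (prod_topology Mt Mt) (U \<times> U)" using U(1) by (simp add: openin_prod_Times_iff)
      ultimately show ?thesis using U True ab by blast
    next
      case False
      then have ne: "D a \<noteq> D b" using ab by auto
      define e where "e = dist (D a) (D b) / 2"
      have e: "e > 0" using ne by (simp add: e_def)
      define G1 where "G1 = {x \<in> topspace Mt. D x \<in> X \<inter> ball (D a) e}"
      define G2 where "G2 = {x \<in> topspace Mt. D x \<in> X \<inter> ball (D b) e}"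
      have ob: "openin (top_of_set X) (X \<inter> ball c e)" for c by (simp add: openin_open_Int)
      have oG: "openin Mt G1" "openin Mt G2" unfolding G1_def G2_def
        using openin_continuous_map_preimage[OF cont ob] by blast+
      have aX: "D a \<in> X" "D b \<in> X" using cont ab by (auto simp: continuous_map_def)
      have inG: "a \<in> G1" "b \<in> G2" unfolding G1_def G2_def using ab aX e by auto
      have "G1 \<times> G2 \<subseteq> W"
      proof clarify
        fix x y assume "x \<in> G1" "y \<in> G2"
        then have "dist (D a) (D x) < e" "dist (D b) (D y) < e" "x \<in> topspace Mt" "y \<in> topspace Mt"
          unfolding G1_def G2_def by auto
        moreover have "dist (D a) (D b) \<le> dist (D a) (D x) + dist (D b) (D x)"
          by (rule dist_triangle2)
        ultimately show "(x, y) \<in> W" unfolding W_def e_def by auto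
      qed
      moreover have "openin (prod_topology Mt Mt) (G1 \<times> G2)" using oG by (simp add: openin_prod_Times_iff)
      ultimately show ?thesis using inG ab by blast
    qed
  qed
  have "K \<times> K \<subseteq> W"
    using K compactin_subset_topspace unfolding W_def by (auto dest: inj_onD)
  then obtain U1 U2 where U: "openin Mt U1" "openin Mt U2" "K \<subseteq> U1" "K \<subseteq> U2" "U1 \<times> U2 \<subseteq> W"
    using Wallace_theorem_prod_topology[OF K(1) K(1) oW] by blast
  show ?thesis
  proof (intro exI conjI)
    show "openin Mt (U1 \<inter> U2)" using U by blast
    show "K \<subseteq> U1 \<inter> U2" using U by blast
    show "inj_on D (U1 \<inter> U2)"
    proof (rule inj_onI)
      fix a b assume "a \<in> U1 \<inter> U2" "b \<in> U1 \<inter> U2" "D a = D b"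
      then have "(a,b) \<in> W" using U(5) by blast
      then show "a = b" using \<open>D a = D b\<close> unfolding W_def by auto
    qed
  qed
qed

definition invq :: "'e::real_inner \<Rightarrow> 'e \<Rightarrow> 'e" where
  "invq q u = q + inverse ((norm (u - q))\<^sup>2) *\<^sub>R (u - q)"

lemma invq_ne: "u \<noteq> q \<Longrightarrow> invq q u \<noteq> q"
  by (simp add: invq_def)

lemma invq_inv: assumes "u \<noteq> q" shows "invq q (invq q u) = u"
proof -
  define e where "e = u - q"
  have e: "e \<noteq> 0" using assms by (simp add: e_def)
  define k where "k = inverse ((norm e)\<^sup>2)"
  have k: "k > 0" using e by (simp add: k_def)
  have ke: "k * (norm e)\<^sup>2 = 1" using e by (simp add: k_def)
  have n: "(norm (k *\<^sub>R e))\<^sup>2 = k * (k * (norm e)\<^sup>2)" using k by (simp add: power_mult_distrib power2_eq_square)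
  have i: "inverse ((norm (k *\<^sub>R e))\<^sup>2) * k = 1" unfolding n ke using k by simp
  have "invq q u = q + k *\<^sub>R e" by (simp add: invq_def k_def e_def)
  then have "invq q (invq q u) = q + (inverse ((norm (k *\<^sub>R e))\<^sup>2) * k) *\<^sub>R e"
    by (simp add: invq_def)
  then show ?thesis using i by (simp add: e_def)
qed

lemma invq_sphere:
  fixes q :: "'e::real_inner"
  assumes q: "norm q = r" "r > 0" and u: "u \<noteq> q"
  shows "norm (invq q u) = r \<longleftrightarrow> 2 * (q \<bullet> (u - q)) + 1 = 0"
proof -
  define e where "e = u - q"
  have e: "e \<noteq> 0" using u by (simp add: e_def)
  define k where "k = inverse ((norm e)\<^sup>2)"
  have k: "k > 0" using e by (simp add: k_def)
  have ke: "k * (norm e)\<^sup>2 = 1" using e by (simp add: k_def)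
  have "(norm (q + k *\<^sub>R e))\<^sup>2 = (q + k *\<^sub>R e) \<bullet> (q + k *\<^sub>R e)" by (simp add: power2_norm_eq_inner)
  also have "\<dots> = q \<bullet> q + 2 * k * (q \<bullet> e) + k\<^sup>2 * (e \<bullet> e)"
    by (simp add: inner_add_left inner_add_right algebra_simps power2_eq_square inner_commute)
  also have "\<dots> = r\<^sup>2 + 2 * k * (q \<bullet> e) + k\<^sup>2 * (norm e)\<^sup>2"
    using q by (simp add: power2_norm_eq_inner[symmetric])
  also have "\<dots> = r\<^sup>2 + k * (2 * (q \<bullet> e) + 1)"
    using ke by (simp add: power2_eq_square algebra_simps)
  finally have eq: "(norm (q + k *\<^sub>R e))\<^sup>2 = r\<^sup>2 + k * (2 * (q \<bullet> e) + 1)" .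
  have "norm (q + k *\<^sub>R e) = r \<longleftrightarrow> (norm (q + k *\<^sub>R e))\<^sup>2 = r\<^sup>2"
    using q by (metis norm_ge_zero power2_eq_iff_nonneg less_imp_le)
  also have "\<dots> \<longleftrightarrow> 2 * (q \<bullet> e) + 1 = 0" using eq k by simp
  finally show ?thesis by (simp add: invq_def e_def k_def)
qed

lemma invq_cap:
  fixes q :: "'e::real_inner"
  assumes l: "linear l" and u: "u \<noteq> q"
  shows "l (invq q u) > s \<longleftrightarrow> (s - l q) * (norm (u - q))\<^sup>2 - l (u - q) < 0"
proof -
  define e where "e = u - q"
  have e: "e \<noteq> 0" using u by (simp add: e_def)
  have np: "(norm e)\<^sup>2 > 0" using e by simp
  have "l (invq q u) = l q + l e / (norm e)\<^sup>2"
    unfolding invq_def e_def[symmetric] using l by (simp add: linear_add linear_scale divide_inverse mult.commute)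
  then have "l (invq q u) > s \<longleftrightarrow> l e / (norm e)\<^sup>2 > s - l q" by auto
  also have "\<dots> \<longleftrightarrow> l e > (s - l q) * (norm e)\<^sup>2" using np by (simp add: pos_less_divide_eq)
  finally show ?thesis by (simp add: e_def)
qed

lemma convex_capset:
  fixes q :: "'e::real_inner"
  assumes l: "linear l" and m: "m \<ge> 0"
  shows "convex {u. m * (norm (u - q))\<^sup>2 - l (u - q) < 0}"
proof (rule convexI)
  fix u1 u2 and a b :: real
  assume u1: "u1 \<in> {u. m * (norm (u - q))\<^sup>2 - l (u - q) < 0}" and u2: "u2 \<in> {u. m * (norm (u - q))\<^sup>2 - l (u - q) < 0}"
    and ab: "0 \<le> a" "0 \<le> b" "a + b = 1"
  define e1 where "e1 = u1 - q"
  define e2 where "e2 = u2 - q"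
  have w0: "a *\<^sub>R e1 + b *\<^sub>R e2 = a *\<^sub>R u1 + b *\<^sub>R u2 - (a + b) *\<^sub>R q"
    by (simp add: e1_def e2_def algebra_simps)
  have w: "a *\<^sub>R u1 + b *\<^sub>R u2 - q = a *\<^sub>R e1 + b *\<^sub>R e2" using w0 ab(3) by simp
  have lw: "l (a *\<^sub>R e1 + b *\<^sub>R e2) = a * l e1 + b * l e2" using l by (simp add: linear_add linear_scale)
  have "norm (a *\<^sub>R e1 + b *\<^sub>R e2) \<le> norm (a *\<^sub>R e1) + norm (b *\<^sub>R e2)" by (rule norm_triangle_ineq)
  then have n1: "norm (a *\<^sub>R e1 + b *\<^sub>R e2) \<le> a * norm e1 + b * norm e2" using ab by simp
  have "(norm (a *\<^sub>R e1 + b *\<^sub>R e2))\<^sup>2 \<le> (a * norm e1 + b * norm e2)\<^sup>2"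
    using n1 by (simp add: power_mono)
  also have "\<dots> \<le> a * (norm e1)\<^sup>2 + b * (norm e2)\<^sup>2"
  proof -
    have "a * (norm e1)\<^sup>2 + b * (norm e2)\<^sup>2 - (a * norm e1 + b * norm e2)\<^sup>2 = a * b * (norm e1 - norm e2)\<^sup>2"
    proof -
      have b: "b = 1 - a" using ab(3) by simp
      show ?thesis unfolding b by (simp add: power2_eq_square algebra_simps)
    qed
    moreover have "a * b * (norm e1 - norm e2)\<^sup>2 \<ge> 0" using ab by simp
    ultimately show ?thesis by linarith
  qed
  finally have nn: "(norm (a *\<^sub>R e1 + b *\<^sub>R e2))\<^sup>2 \<le> a * (norm e1)\<^sup>2 + b * (norm e2)\<^sup>2" .
  have f1: "m * (norm e1)\<^sup>2 - l e1 < 0" using u1 by (simp add: e1_def)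
  have f2: "m * (norm e2)\<^sup>2 - l e2 < 0" using u2 by (simp add: e2_def)
  have "m * (norm (a *\<^sub>R e1 + b *\<^sub>R e2))\<^sup>2 - l (a *\<^sub>R e1 + b *\<^sub>R e2)
        \<le> a * (m * (norm e1)\<^sup>2 - l e1) + b * (m * (norm e2)\<^sup>2 - l e2)"
    using mult_left_mono[OF nn m] lw by (simp add: algebra_simps)
  also have "\<dots> < 0"
  proof (cases "a = 0")
    case True then show ?thesis using ab f2 by simp
  next
    case False then have "a > 0" using ab by simp
    then have "a * (m * (norm e1)\<^sup>2 - l e1) < 0" using f1 by (simp add: mult_pos_neg)
    moreover have "b * (m * (norm e2)\<^sup>2 - l e2) \<le> 0" using ab f2 by (simp add: mult_nonneg_nonpos)
    ultimately show ?thesis by linarith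
  qed
  finally show "a *\<^sub>R u1 + b *\<^sub>R u2 \<in> {u. m * (norm (u - q))\<^sup>2 - l (u - q) < 0}"
    using w by simp
qed

definition CV :: "'e::real_inner \<Rightarrow> ('e \<Rightarrow> real) \<Rightarrow> real \<Rightarrow> ('e \<Rightarrow> real) \<Rightarrow> real \<Rightarrow> 'e set" where
  "CV q l1 s1 l2 s2 = {u. 2 * (q \<bullet> (u - q)) + 1 = 0 \<and> (s1 - l1 q) * (norm (u - q))\<^sup>2 - l1 (u - q) < 0
      \<and> (s2 - l2 q) * (norm (u - q))\<^sup>2 - l2 (u - q) < 0}"

lemma CV_ne_q: "u \<in> CV q l1 s1 l2 s2 \<Longrightarrow> u \<noteq> q"
  by (auto simp: CV_def)

lemma caps_eq:
  fixes q :: "'e::real_inner" and l1 l2 :: "'e \<Rightarrow> real" and s1 s2 :: real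
  assumes q: "norm q = r" "r > 0" and l: "linear l1" "linear l2" and qs: "l1 q \<le> s1" "l2 q \<le> s2"
  shows "{x. norm x = r \<and> l1 x > s1 \<and> l2 x > s2} = invq q ` CV q l1 s1 l2 s2"
proof
  show "{x. norm x = r \<and> l1 x > s1 \<and> l2 x > s2} \<subseteq> invq q ` CV q l1 s1 l2 s2"
  proof
    fix x assume x: "x \<in> {x. norm x = r \<and> l1 x > s1 \<and> l2 x > s2}"
    then have xq: "x \<noteq> q" using qs by auto
    define u where "u = invq q x"
    have uq: "u \<noteq> q" using invq_ne[OF xq] by (simp add: u_def)
    have ux: "invq q u = x" using invq_inv[OF xq] by (simp add: u_def)
    have "u \<in> CV q l1 s1 l2 s2"
      using x invq_sphere[OF q uq] invq_cap[OF l(1) uq] invq_cap[OF l(2) uq] ux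
      by (simp add: CV_def)
    then show "x \<in> invq q ` CV q l1 s1 l2 s2" using ux by force
  qed
  show "invq q ` CV q l1 s1 l2 s2 \<subseteq> {x. norm x = r \<and> l1 x > s1 \<and> l2 x > s2}"
  proof clarify
    fix u assume u: "u \<in> CV q l1 s1 l2 s2"
    have uq: "u \<noteq> q" using CV_ne_q[OF u] .
    show "norm (invq q u) = r \<and> s1 < l1 (invq q u) \<and> s2 < l2 (invq q u)"
      using u invq_sphere[OF q uq] invq_cap[OF l(1) uq] invq_cap[OF l(2) uq]
      by (simp add: CV_def)
  qed
qed

lemma convex_CV:
  fixes q :: "'e::real_inner"
  assumes l: "linear l1" "linear l2" and qs: "l1 q \<le> s1" "l2 q \<le> s2"
  shows "convex (CV q l1 s1 l2 s2)"
proof -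
  have "CV q l1 s1 l2 s2 = {u. (2 *\<^sub>R q) \<bullet> u = 2 * (q \<bullet> q) - 1}
      \<inter> {u. (s1 - l1 q) * (norm (u - q))\<^sup>2 - l1 (u - q) < 0} \<inter> {u. (s2 - l2 q) * (norm (u - q))\<^sup>2 - l2 (u - q) < 0}"
    by (auto simp: CV_def inner_diff_right algebra_simps)
  moreover have "convex \<dots>"
    using convex_capset[OF l(1), of "s1 - l1 q" q] convex_capset[OF l(2), of "s2 - l2 q" q] qs
    by (intro convex_Int convex_hyperplane) auto
  ultimately show ?thesis by simp
qed

lemma cont_invq: "continuous_on S (invq q)" if "\<forall>u\<in>S. u \<noteq> q"
  unfolding invq_def using that by (intro continuous_intros) auto

lemma caps_connected:
  fixes q :: "'e::real_inner" and l1 l2 :: "'e \<Rightarrow> real" and s1 s2 :: real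
  assumes q: "norm q = r" "r > 0" and l: "linear l1" "linear l2" and qs: "l1 q \<le> s1" "l2 q \<le> s2"
  shows "connected {x. norm x = r \<and> l1 x > s1 \<and> l2 x > s2}"
  unfolding caps_eq[OF assms]
  by (rule connected_continuous_image[OF cont_invq convex_connected[OF convex_CV[OF l qs]]])
     (auto dest: CV_ne_q)

lemma caps_punctured_connected:
  fixes q :: "'e::euclidean_space" and l1 l2 :: "'e \<Rightarrow> real" and s1 s2 :: real
  assumes q: "norm q = r" "r > 0" and l: "linear l1" "linear l2" and qs: "l1 q \<le> s1" "l2 q \<le> s2"
    and dim: "DIM('e) \<ge> 3" and p: "p \<in> {x. norm x = r \<and> l1 x > s1 \<and> l2 x > s2}"
  shows "connected ({x. norm x = r \<and> l1 x > s1 \<and> l2 x > s2} - {p})"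
proof -
  let ?C = "CV q l1 s1 l2 s2"
  have pq: "p \<noteq> q" using p qs by auto
  define u0 where "u0 = invq q p"
  have u0: "invq q u0 = p" "u0 \<noteq> q" using invq_inv[OF pq] invq_ne[OF pq] by (auto simp: u0_def)
  have u0C: "u0 \<in> ?C" using p unfolding caps_eq[OF assms(1-6)] using invq_inv CV_ne_q u0_def by force
  have inj: "inj_on (invq q) ?C" by (rule inj_on_inverseI[of _ "invq q"]) (auto dest: CV_ne_q intro: invq_inv)
  have eq: "{x. norm x = r \<and> l1 x > s1 \<and> l2 x > s2} - {p} = invq q ` (?C - {u0})"
  proof -
    have "invq q ` (?C - {u0}) = invq q ` ?C - invq q ` {u0}"
      by (rule inj_on_image_set_diff[OF inj]) (use u0C in auto)
    then show ?thesis unfolding caps_eq[OF assms(1-6)] using u0(1) by simp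
  qed
  have bl: "bounded_linear l1" "bounded_linear l2" using l linear_conv_bounded_linear by auto
  have ct: "continuous_on UNIV (\<lambda>u. (s1 - l1 q) * (norm (u - q))\<^sup>2 - l1 (u - q))"
           "continuous_on UNIV (\<lambda>u. (s2 - l2 q) * (norm (u - q))\<^sup>2 - l2 (u - q))"
  proof -
    have cl: "continuous_on UNIV (\<lambda>u. l (u - q))" if "bounded_linear l" for l :: "'e \<Rightarrow> real"
      using continuous_on_compose[of UNIV "\<lambda>u. u - q" l] linear_continuous_on[OF that]
      by (simp add: o_def continuous_on_diff continuous_on_id continuous_on_const)
    show "continuous_on UNIV (\<lambda>u. (s1 - l1 q) * (norm (u - q))\<^sup>2 - l1 (u - q))"
      by (intro continuous_intros cl bl)
    show "continuous_on UNIV (\<lambda>u. (s2 - l2 q) * (norm (u - q))\<^sup>2 - l2 (u - q))"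
      by (intro continuous_intros cl bl)
  qed
  define Op where "Op = {u. (s1 - l1 q) * (norm (u - q))\<^sup>2 - l1 (u - q) < 0} \<inter> {u. (s2 - l2 q) * (norm (u - q))\<^sup>2 - l2 (u - q) < 0}"
  have oOp: "open Op" unfolding Op_def
    by (intro open_Int open_Collect_less[OF ct(1)] open_Collect_less[OF ct(2)] continuous_on_const)
  have Ceq: "?C = {u. (2 *\<^sub>R q) \<bullet> u = 2 * (q \<bullet> q) - 1} \<inter> Op"
    by (auto simp: CV_def Op_def inner_diff_right algebra_simps)
  have qne: "2 *\<^sub>R q \<noteq> 0" using q by auto
  have "aff_dim ?C = aff_dim {u. (2 *\<^sub>R q) \<bullet> u = 2 * (q \<bullet> q) - 1}"
    unfolding Ceq using u0C Ceq by (intro aff_dim_convex_Int_open convex_hyperplane oOp) auto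
  also have "\<dots> = DIM('e) - 1" using aff_dim_hyperplane[OF qne, of "2 * (q \<bullet> q) - 1"] by simp
  finally have "aff_dim ?C \<noteq> 1" using dim by simp
  then have "connected (?C - {u0})"
    by (rule connected_punctured_convex[OF convex_CV[OF l qs]])
  moreover have "continuous_on (?C - {u0}) (invq q)" by (rule cont_invq) (auto dest: CV_ne_q)
  ultimately show ?thesis unfolding eq using connected_continuous_image by blast
qed

lemma abstract_main:
  fixes X :: "'b::metric_space set"
  assumes Haus: "Hausdorff_space Mt" and lh: "local_homeo_map Mt (top_of_set X) D"
    and V: "openin Mt V" "inj_on D V" and K: "compactin Mt (Mt closure_of V)"
    and lc: "\<And>z W. z \<in> closure (D ` V) - D ` V \<Longrightarrow> z \<in> X \<Longrightarrow> openin (top_of_set X) W \<Longrightarrow> z \<in> W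
       \<Longrightarrow> \<exists>N. openin (top_of_set X) N \<and> z \<in> N \<and> N \<subseteq> W \<and> connected (N \<inter> D ` V)"
  shows "\<exists>V'. openin Mt V' \<and> Mt closure_of V \<subseteq> V' \<and> inj_on D V'"
  using inj_nbhd[OF Haus lh K inj_closure[OF Haus lh V lc]] by blast

lemma linear_inner_left': "linear (\<lambda>x. z \<bullet> (x::'a::real_inner))"
  by (simp add: bounded_linear.linear bounded_linear_inner_right)

lemma hemi_lc:
  fixes l :: "'e::euclidean_space \<Rightarrow> real"
  assumes l: "linear l" and z: "z \<in> sphere 0 1" and zc: "z \<in> closure {v \<in> sphere 0 1. 0 < l v}"
    and W: "openin (top_of_set (sphere 0 1)) W" "z \<in> W"
  shows "\<exists>N. openin (top_of_set (sphere 0 1)) N \<and> z \<in> N \<and> N \<subseteq> W \<and> connected (N \<inter> {v \<in> sphere 0 1. 0 < l v})"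
proof -
  have bl: "bounded_linear l" using l linear_conv_bounded_linear by auto
  have "closed {v. 0 \<le> l v}"
    by (rule closed_Collect_le[OF continuous_on_const linear_continuous_on[OF bl]])
  then have "closure {v \<in> sphere 0 1. 0 < l v} \<subseteq> {v. 0 \<le> l v}"
    by (intro closure_minimal) auto
  then have lz: "0 \<le> l z" using zc by auto
  obtain T where T: "open T" "W = sphere 0 1 \<inter> T" using W(1) by (auto simp: openin_open)
  obtain e where e: "e > 0" "ball z e \<subseteq> T" using T W(2) open_contains_ball by blast
  define s where "s = max 0 (1 - e\<^sup>2 / 4)"
  have s: "0 \<le> s" "s < 1" "1 - e\<^sup>2/4 \<le> s" using e by (auto simp: s_def)
  define N where "N = sphere 0 1 \<inter> {x. z \<bullet> x > s}"
  have nz: "norm z = 1" using z by simp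
  have zz: "z \<bullet> z = 1" using nz by (simp add: dot_square_norm)
  show ?thesis
  proof (intro exI conjI)
    show "openin (top_of_set (sphere 0 1)) N" unfolding N_def
      by (simp add: openin_open_Int open_halfspace_gt)
    show "z \<in> N" using z zz s by (simp add: N_def)
    show "N \<subseteq> W"
    proof
      fix x assume x: "x \<in> N"
      then have nx: "norm x = 1" and zx: "z \<bullet> x > s" by (auto simp: N_def)
      have "(norm (z - x))\<^sup>2 = z \<bullet> z - 2 * (z \<bullet> x) + x \<bullet> x"
        by (simp add: power2_norm_eq_inner inner_diff_left inner_diff_right inner_commute)
      also have "\<dots> = 2 - 2 * (z \<bullet> x)" using zz nx by (simp add: dot_square_norm)
      also have "\<dots> < e\<^sup>2" using zx s e by (simp add: power2_eq_square) 
      finally have "norm (z - x) < e" using e by (simp add: power2_less_imp_less)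
      then show "x \<in> W" using e T x by (auto simp: N_def dist_norm)
    qed
    have "N \<inter> {v \<in> sphere 0 1. 0 < l v} = {x. norm x = 1 \<and> (\<lambda>x. z \<bullet> x) x > s \<and> l x > 0}"
      by (auto simp: N_def)
    moreover have "connected {x. norm x = 1 \<and> (\<lambda>x. z \<bullet> x) x > s \<and> l x > 0}"
      by (rule caps_connected[of "-z"]) (use nz zz s lz l linear_inner_left' in \<open>auto simp: linear_neg\<close>)
    ultimately show "connected (N \<inter> {v \<in> sphere 0 1. 0 < l v})" by simp
  qed
qed

lemma proj_part:
  "\<forall>(Mt :: 'm topology) (M :: 'c topology) p (D :: 'm \<Rightarrow> real^'n) V.
      CARD('n) \<ge> 3 \<and> dev_data Mt M p D (sphere 0 1) proj_group \<and>
      max_chart Mt p D hemispheres V \<and> compactin Mt (Mt closure_of V) \<longrightarrow>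
      (\<exists>V'. openin Mt V' \<and> Mt closure_of V \<subseteq> V' \<and> inj_on D V')"
proof (intro allI impI, elim conjE)
  fix Mt :: "'m topology" and M :: "'c topology" and p and D :: "'m \<Rightarrow> real^'n" and V
  assume dd: "dev_data Mt M p D (sphere 0 1) proj_group" and mc: "max_chart Mt p D hemispheres V"
    and K: "compactin Mt (Mt closure_of V)"
  have Haus: "Hausdorff_space Mt" and lh: "local_homeo_map Mt (top_of_set (sphere 0 1)) D"
    using dd by (auto simp: dev_data_def)
  have V: "openin Mt V" "inj_on D V" and hem: "D ` V \<in> hemispheres" using mc by (auto simp: max_chart_def)
  obtain l :: "real^'n \<Rightarrow> real" where l: "linear l" and DV: "D ` V = {v \<in> sphere 0 1. l v > 0}"
    using hem by (auto simp: hemispheres_def)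
  show "\<exists>V'. openin Mt V' \<and> Mt closure_of V \<subseteq> V' \<and> inj_on D V'"
  proof (rule abstract_main[OF Haus lh V K])
    fix z W assume "z \<in> closure (D ` V) - D ` V" "z \<in> sphere 0 1" "openin (top_of_set (sphere 0 (1::real))) W" "z \<in> W"
    then show "\<exists>N. openin (top_of_set (sphere 0 1)) N \<and> z \<in> N \<and> N \<subseteq> W \<and> connected (N \<inter> D ` V)"
      unfolding DV using hemi_lc[OF l] by blast
  qed
qed

lemma cap2_conn:
  fixes q c1 c2 :: "'e::real_inner"
  assumes "norm q = r" "r > 0" "c1 \<bullet> q \<le> s1" "c2 \<bullet> q \<le> s2"
  shows "connected {x. norm x = r \<and> c1 \<bullet> x > s1 \<and> c2 \<bullet> x > s2}"
  using caps_connected[of q r "\<lambda>x. c1 \<bullet> x" "\<lambda>x. c2 \<bullet> x" s1 s2] assms linear_inner_left' by auto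

lemma cap2_punct_conn:
  fixes q c1 c2 :: "'e::euclidean_space"
  assumes "norm q = r" "r > 0" "c1 \<bullet> q \<le> s1" "c2 \<bullet> q \<le> s2" "DIM('e) \<ge> 3"
    and "p \<in> {x. norm x = r \<and> c1 \<bullet> x > s1 \<and> c2 \<bullet> x > s2}"
  shows "connected ({x. norm x = r \<and> c1 \<bullet> x > s1 \<and> c2 \<bullet> x > s2} - {p})"
  using caps_punctured_connected[of q r "\<lambda>x. c1 \<bullet> x" "\<lambda>x. c2 \<bullet> x" s1 s2 p] assms linear_inner_left' by auto

lemma cs_le: "norm a = c \<Longrightarrow> norm (x::'e::real_inner) = r \<Longrightarrow> \<bar>a \<bullet> x\<bar> \<le> r * c"
  using Cauchy_Schwarz_ineq2[of a x] by (simp add: mult.commute)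

lemma cs_eq:
  fixes a x y :: "'e::real_inner"
  assumes "norm a = c" "c > 0" "norm x = r" "norm y = r" "a \<bullet> x = r * c" "a \<bullet> y = r * c"
  shows "x = y"
proof -
  have "norm a *\<^sub>R x = norm x *\<^sub>R a" using norm_cauchy_schwarz_eq[of a x] assms by (simp add: mult.commute)
  moreover have "norm a *\<^sub>R y = norm y *\<^sub>R a" using norm_cauchy_schwarz_eq[of a y] assms by (simp add: mult.commute)
  ultimately have "c *\<^sub>R x = c *\<^sub>R y" using assms by simp
  then show ?thesis using assms(2) by simp
qed

definition QQ :: "'p::real_inner \<Rightarrow> 'q::real_inner \<Rightarrow> 'p \<Rightarrow> 'q \<Rightarrow> real \<Rightarrow> real \<Rightarrow> ('p \<times> 'q) set" where
  "QQ a b x0 y0 r s = {(x,y). norm x = r \<and> x0 \<bullet> x > s \<and> norm y = r \<and> y0 \<bullet> y > s \<and> a \<bullet> x > b \<bullet> y}"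

lemma GC_sing:
  fixes a x0 :: "'p::euclidean_space" and b y0 :: "'q::euclidean_space"
  assumes r: "r > 0" and c: "c > 0" and na: "norm a = c" and nb: "norm b = c"
    and nx0: "norm x0 = r" and ny0: "norm y0 = r" and ax0: "a \<bullet> x0 = r * c" and by0: "b \<bullet> y0 = r * c"
    and s: "0 \<le> s" "s < r\<^sup>2" and dim: "DIM('q) \<ge> 3"
  shows "connected (QQ a b x0 y0 r s)"
proof -
  define C2 where "C2 = {y. norm y = r \<and> y0 \<bullet> y > s \<and> y0 \<bullet> y > s} - {y0}"
  define A where "A t = {x. norm x = r \<and> x0 \<bullet> x > s \<and> a \<bullet> x > t}" for t
  have y0y0: "y0 \<bullet> y0 = r\<^sup>2" using ny0 by (simp add: dot_square_norm)
  have x0x0: "x0 \<bullet> x0 = r\<^sup>2" using nx0 by (simp add: dot_square_norm)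
  have C2c: "connected C2" unfolding C2_def
    by (rule cap2_punct_conn[of "-y0" r]) (use ny0 r s dim y0y0 in auto)
  have blt: "b \<bullet> y < r * c" if "norm y = r" "y \<noteq> y0" for y
  proof -
    have "b \<bullet> y \<le> r * c" using cs_le[OF nb that(1)] by linarith
    moreover have "b \<bullet> y \<noteq> r * c" using cs_eq[OF nb c that(1) ny0 _ by0] that(2) by blast
    ultimately show ?thesis by linarith
  qed
  have Ac: "connected (A t)" if "t \<ge> - (r * c)" for t unfolding A_def
    by (rule cap2_conn[of "-x0" r]) (use nx0 r s that x0x0 ax0 in auto)
  have x0A: "x0 \<in> A t" if "t < r * c" for t unfolding A_def using nx0 x0x0 s ax0 that by auto
  show ?thesis
  proof (cases "C2 = {}")
    case True
    have "QQ a b x0 y0 r s = {}"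
    proof (rule ccontr)
      assume "QQ a b x0 y0 r s \<noteq> {}"
      then obtain x y where xy: "norm x = r" "x0 \<bullet> x > s" "norm y = r" "y0 \<bullet> y > s" "a \<bullet> x > b \<bullet> y"
        unfolding QQ_def by auto
      have "a \<bullet> x \<le> r * c" using cs_le[OF na xy(1)] by linarith
      then have "y \<noteq> y0" using xy by0 by auto
      then show False using True xy unfolding C2_def by auto
    qed
    then show ?thesis by simp
  next
    case False
    define F where "F = (\<lambda>y. A (b \<bullet> y) \<times> {y} \<union> {x0} \<times> C2) ` C2"
    have eq: "QQ a b x0 y0 r s = \<Union>F"
    proof
      show "QQ a b x0 y0 r s \<subseteq> \<Union>F"
      proof clarify
        fix x y assume "(x,y) \<in> QQ a b x0 y0 r s"
        then have xy: "norm x = r" "x0 \<bullet> x > s" "norm y = r" "y0 \<bullet> y > s" "a \<bullet> x > b \<bullet> y"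
          unfolding QQ_def by auto
        have "a \<bullet> x \<le> r * c" using cs_le[OF na xy(1)] by linarith
        then have "y \<noteq> y0" using xy by0 by auto
        then have "y \<in> C2" using xy unfolding C2_def by auto
        moreover have "x \<in> A (b \<bullet> y)" using xy unfolding A_def by auto
        ultimately show "(x,y) \<in> \<Union>F" unfolding F_def by blast
      qed
      show "\<Union>F \<subseteq> QQ a b x0 y0 r s"
      proof
        fix w assume "w \<in> \<Union>F"
        then obtain y where y: "y \<in> C2" "w \<in> A (b \<bullet> y) \<times> {y} \<union> {x0} \<times> C2" unfolding F_def by blast
        then show "w \<in> QQ a b x0 y0 r s"
        proof (elim UnE)
          assume "w \<in> A (b \<bullet> y) \<times> {y}"
          then show ?thesis using y(1) unfolding A_def C2_def QQ_def by auto
        next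
          assume w: "w \<in> {x0} \<times> C2"
          then obtain y' where y': "w = (x0, y')" "y' \<in> C2" by auto
          then have "norm y' = r" "y' \<noteq> y0" "y0 \<bullet> y' > s" unfolding C2_def by auto
          then have "b \<bullet> y' < r * c" using blt by blast
          then show ?thesis using y' \<open>norm y' = r\<close> \<open>y0 \<bullet> y' > s\<close> nx0 x0x0 s ax0 unfolding QQ_def by auto
        qed
      qed
    qed
    have "connected (\<Union>F)"
    proof (rule connected_Union)
      fix S assume "S \<in> F"
      then obtain y where y: "y \<in> C2" "S = A (b \<bullet> y) \<times> {y} \<union> {x0} \<times> C2" unfolding F_def by blast
      have ny: "norm y = r" "y \<noteq> y0" using y(1) unfolding C2_def by auto
      have bl: "b \<bullet> y < r * c" using blt[OF ny] .
      have bg: "b \<bullet> y \<ge> - (r * c)" using cs_le[OF nb ny(1)] by linarith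
      have "(x0, y) \<in> A (b \<bullet> y) \<times> {y} \<inter> {x0} \<times> C2" using x0A[OF bl] y(1) by auto
      then show "connected S" unfolding y(2)
        by (intro connected_Un connected_Times Ac bg C2c connected_sing) auto
    next
      obtain y where "y \<in> C2" using False by blast
      then have "(x0, y) \<in> \<Inter>F" unfolding F_def by blast
      then show "\<Inter>F \<noteq> {}" by blast
    qed
    then show ?thesis using eq by simp
  qed
qed

lemma GC_gen:
  fixes a x0 :: "'p::euclidean_space" and b y0 :: "'q::euclidean_space"
  assumes r: "r > 0" and c: "c > 0" and na: "norm a = c" and nb: "norm b = c"
    and nx0: "norm x0 = r" and ny0: "norm y0 = r"
    and s1: "- (r / c) * (a \<bullet> x0) \<le> s" and s2: "(r / c) * (b \<bullet> y0) \<le> s"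
  shows "connected (QQ a b x0 y0 r s)"
proof -
  define A where "A t = {x. norm x = r \<and> x0 \<bullet> x > s \<and> a \<bullet> x > t}" for t
  define B where "B t = {y. norm y = r \<and> y0 \<bullet> y > s \<and> (- b) \<bullet> y > - t}" for t
  have nq1: "norm (- (r / c) *\<^sub>R a) = r" using na r c by simp
  have nq2: "norm ((r / c) *\<^sub>R b) = r" using nb r c by simp
  have aa: "a \<bullet> a = c\<^sup>2" using na by (simp add: dot_square_norm)
  have bb: "b \<bullet> b = c\<^sup>2" using nb by (simp add: dot_square_norm)
  have Ac: "connected (A t)" if "t \<ge> - (r * c)" for t unfolding A_def
  proof (rule cap2_conn[OF nq1 r])
    show "x0 \<bullet> (- (r / c) *\<^sub>R a) \<le> s" using s1 by (simp add: inner_commute)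
    show "a \<bullet> (- (r / c) *\<^sub>R a) \<le> t" using that aa c by (simp add: power2_eq_square)
  qed
  have Bc: "connected (B t)" if "t \<le> r * c" for t unfolding B_def
  proof (rule cap2_conn[OF nq2 r])
    show "y0 \<bullet> ((r / c) *\<^sub>R b) \<le> s" using s2 by (simp add: inner_commute)
    show "(- b) \<bullet> ((r / c) *\<^sub>R b) \<le> - t" using that bb c by (simp add: power2_eq_square)
  qed
  define T where "T = {t. - (r * c) \<le> t \<and> t \<le> r * c \<and> A t \<noteq> {} \<and> B t \<noteq> {}}"
  have eq: "QQ a b x0 y0 r s = (\<Union>t\<in>T. A t \<times> B t)"
  proof
    show "QQ a b x0 y0 r s \<subseteq> (\<Union>t\<in>T. A t \<times> B t)"
    proof clarify
      fix x y assume "(x,y) \<in> QQ a b x0 y0 r s"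
      then have xy: "norm x = r" "x0 \<bullet> x > s" "norm y = r" "y0 \<bullet> y > s" "a \<bullet> x > b \<bullet> y"
        unfolding QQ_def by auto
      define t where "t = (a \<bullet> x + b \<bullet> y) / 2"
      have "x \<in> A t" "y \<in> B t" using xy unfolding A_def B_def t_def by auto
      moreover have "- (r * c) \<le> t" "t \<le> r * c"
        using cs_le[OF na xy(1)] cs_le[OF nb xy(3)] unfolding t_def abs_le_iff by auto
      ultimately show "(x,y) \<in> (\<Union>t\<in>T. A t \<times> B t)" unfolding T_def by blast
    qed
    show "(\<Union>t\<in>T. A t \<times> B t) \<subseteq> QQ a b x0 y0 r s"
      unfolding A_def B_def QQ_def by auto
  qed
  show ?thesis
  proof (cases "T = {}")
    case True then show ?thesis using eq by simp
  next
    case False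
    then obtain t1 where t1: "t1 \<in> T" by blast
    define F where "F = (\<lambda>t. A t \<times> B t \<union> A t1 \<times> B t1) ` T"
    have "(\<Union>t\<in>T. A t \<times> B t) = \<Union>F" unfolding F_def using t1 by auto
    moreover have "connected (\<Union>F)"
    proof (rule connected_Union)
      fix S assume "S \<in> F"
      then obtain t where t: "t \<in> T" "S = A t \<times> B t \<union> A t1 \<times> B t1" unfolding F_def by blast
      have mono: "A t' \<subseteq> A t''" "B t'' \<subseteq> B t'" if "t'' \<le> t'" for t' t''
        using that unfolding A_def B_def by auto
      have "A t \<times> B t \<inter> A t1 \<times> B t1 \<noteq> {}"
      proof (cases "t \<le> t1")
        case True
        then have "A t1 \<times> B t \<subseteq> A t \<times> B t \<inter> A t1 \<times> B t1" using mono by blast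
        moreover have "A t1 \<times> B t \<noteq> {}" using t(1) t1 unfolding T_def by auto
        ultimately show ?thesis by blast
      next
        case False
        then have "A t \<times> B t1 \<subseteq> A t \<times> B t \<inter> A t1 \<times> B t1" using mono by (meson linear Sigma_mono inf.boundedI order_refl)
        moreover have "A t \<times> B t1 \<noteq> {}" using t(1) t1 unfolding T_def by auto
        ultimately show ?thesis by blast
      qed
      then show "connected S" unfolding t(2)
        using t(1) t1 unfolding T_def by (intro connected_Un connected_Times Ac Bc) auto
    next
      have "A t1 \<times> B t1 \<subseteq> \<Inter>F" unfolding F_def by blast
      moreover have "A t1 \<times> B t1 \<noteq> {}" using t1 unfolding T_def by auto
      ultimately show "\<Inter>F \<noteq> {}" by blast
    qed
    ultimately show ?thesis using eq by simp
  qed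
qed

lemma QQ_swap: "QQ a b x0 y0 r s = (\<lambda>(y,x). (x,y)) ` QQ (-b) (-a) y0 x0 r s"
  unfolding QQ_def by (auto simp: image_iff)

lemma GC:
  fixes a x0 :: "'p::euclidean_space" and b y0 :: "'q::euclidean_space"
  assumes r: "r > 0" and c: "c > 0" and na: "norm a = c" and nb: "norm b = c"
    and nx0: "norm x0 = r" and ny0: "norm y0 = r" and ab: "a \<bullet> x0 = b \<bullet> y0"
    and s: "0 \<le> s" "s < r\<^sup>2" "\<bar>a \<bullet> x0\<bar> < r * c \<longrightarrow> (r / c) * \<bar>a \<bullet> x0\<bar> \<le> s"
    and dim: "DIM('p) \<ge> 3" "DIM('q) \<ge> 3"
  shows "connected (QQ a b x0 y0 r s)"
proof -
  have bd: "\<bar>a \<bullet> x0\<bar> \<le> r * c" using cs_le[OF na nx0] .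
  consider "a \<bullet> x0 = r * c" | "a \<bullet> x0 = - (r * c)" | "\<bar>a \<bullet> x0\<bar> < r * c" using bd by linarith
  then show ?thesis
  proof cases
    case 1 then show ?thesis using GC_sing[OF r c na nb nx0 ny0 _ _ s(1,2) dim(2)] ab by simp
  next
    case 2
    have "connected (QQ (-b) (-a) y0 x0 r s)"
      by (rule GC_sing[OF r c _ _ ny0 nx0 _ _ s(1,2) dim(1)]) (use nb na 2 ab in auto)
    then have "connected ((\<lambda>(y,x). (x,y)) ` QQ (-b) (-a) y0 x0 r s)"
      by (rule connected_continuous_image[rotated]) (auto intro!: continuous_intros simp: case_prod_unfold)
    then show ?thesis using QQ_swap by metis
  next
    case 3
    have "(r / c) * \<bar>a \<bullet> x0\<bar> \<le> s" using s(3) 3 by blast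
    moreover have rc: "r / c \<ge> 0" using r c by simp
    have "(r / c) * (- (a \<bullet> x0)) \<le> (r / c) * \<bar>a \<bullet> x0\<bar>" by (rule mult_left_mono[OF _ rc]) auto
    moreover have "(r / c) * (b \<bullet> y0) \<le> (r / c) * \<bar>a \<bullet> x0\<bar>" using ab by (intro mult_left_mono[OF _ rc]) auto
    ultimately have "- (r / c) * (a \<bullet> x0) \<le> s" "r / c * (b \<bullet> y0) \<le> s" by auto
    then show ?thesis using GC_gen[OF r c na nb nx0 ny0] by blast
  qed
qed

definition ja :: "real^('a::finite+'b::finite) \<Rightarrow> real^'a" where "ja w = (\<chi> i. w $ Inl i)"
definition jb :: "real^('a::finite+'b::finite) \<Rightarrow> real^'b" where "jb w = (\<chi> j. w $ Inr j)"
definition jn :: "real^'a::finite \<Rightarrow> real^'b::finite \<Rightarrow> real^('a+'b)" where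
  "jn x y = (\<chi> k. case k of Inl i \<Rightarrow> x $ i | Inr j \<Rightarrow> y $ j)"

lemma ja_jn [simp]: "ja (jn x y) = x" by (simp add: ja_def jn_def vec_eq_iff)
lemma jb_jn [simp]: "jb (jn x y) = y" by (simp add: jb_def jn_def vec_eq_iff)
lemma jn_ja_jb [simp]: "jn (ja w) (jb w) = w"
  by (simp add: ja_def jb_def jn_def vec_eq_iff split: sum.split)
lemma ja_diff: "ja (w - z) = ja w - ja z" by (simp add: ja_def vec_eq_iff)
lemma jb_diff: "jb (w - z) = jb w - jb z" by (simp add: jb_def vec_eq_iff)
lemma ja_neg: "ja (- w) = - ja w" by (simp add: ja_def vec_eq_iff)
lemma jb_neg: "jb (- w) = - jb w" by (simp add: jb_def vec_eq_iff)

lemma inner_split: "w \<bullet> w' = ja w \<bullet> ja w' + jb w \<bullet> jb w'"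
proof -
  have "w \<bullet> w' = (\<Sum>k\<in>(UNIV::'a set) <+> (UNIV::'b set). w $ k * w' $ k)"
    by (simp add: inner_vec_def)
  also have "\<dots> = (\<Sum>i\<in>UNIV. w $ Inl i * w' $ Inl i) + (\<Sum>j\<in>UNIV. w $ Inr j * w' $ Inr j)"
    by (subst sum.Plus) (auto simp: o_def)
  finally show ?thesis by (simp add: inner_vec_def ja_def jb_def)
qed

lemma ein_form_split: "ein_form v w = ja v \<bullet> ja w - jb v \<bullet> jb w"
proof -
  have "(\<Sum>i\<in>range Inl. v $ i * w $ i) = (\<Sum>i\<in>(UNIV::'a set). v $ Inl i * w $ Inl i)"
    by (subst sum.reindex) (auto simp: o_def)
  moreover have "(\<Sum>i\<in>range Inr. v $ i * w $ i) = (\<Sum>i\<in>(UNIV::'b set). v $ Inr i * w $ Inr i)"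
    by (subst sum.reindex) (auto simp: o_def)
  ultimately show ?thesis by (simp add: ein_form_def inner_vec_def ja_def jb_def)
qed

lemma ein_form_inner: "ein_form v w = jn (ja v) (- jb v) \<bullet> w"
  by (simp add: ein_form_split inner_split)

lemma linear_jn: "linear (\<lambda>p. jn (fst p) (snd p))"
  by (rule linearI) (auto simp: jn_def vec_eq_iff split: sum.split)

lemma cont_jn: "continuous_on S (\<lambda>p. jn (fst p) (snd p))"
  using linear_jn linear_conv_bounded_linear linear_continuous_on by blast

lemma norm_split: "(norm w)\<^sup>2 = (norm (ja w))\<^sup>2 + (norm (jb w))\<^sup>2"
  by (simp add: power2_norm_eq_inner inner_split[of w w])

lemma aux_half: "((A::real) = B \<and> A + B = 1) \<longleftrightarrow> (A = 1/2 \<and> B = 1/2)" by auto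

lemma aux_sqrt: "0 \<le> (x::real) \<Longrightarrow> x\<^sup>2 = 1/2 \<longleftrightarrow> x = sqrt (1/2)"
proof
  assume "0 \<le> x" "x\<^sup>2 = 1/2" then show "x = sqrt (1/2)" using real_sqrt_unique by metis
next
  assume "x = sqrt (1/2)" then show "x\<^sup>2 = 1/2" by simp
qed

lemma ein_tilde_iff:
  "w \<in> ein_tilde \<longleftrightarrow> norm (ja w) = sqrt (1/2) \<and> norm (jb w) = sqrt (1/2)"
proof -
  have "w \<in> ein_tilde \<longleftrightarrow> (norm (ja w))\<^sup>2 = (norm (jb w))\<^sup>2 \<and> (norm w)\<^sup>2 = 1"
    by (simp add: ein_tilde_def ein_form_split power2_norm_eq_inner norm_eq_1)
  also have "\<dots> \<longleftrightarrow> (norm (ja w))\<^sup>2 = 1/2 \<and> (norm (jb w))\<^sup>2 = 1/2"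
    unfolding norm_split by (rule aux_half)
  also have "\<dots> \<longleftrightarrow> norm (ja w) = sqrt (1/2) \<and> norm (jb w) = sqrt (1/2)"
    using aux_sqrt[OF norm_ge_zero, of "ja w"] aux_sqrt[OF norm_ge_zero, of "jb w"] by simp
  finally show ?thesis .
qed

lemma ein_geo:
  fixes vv z :: "real^('a::finite+'b::finite)"
  assumes dims: "CARD('a) \<ge> 3" "CARD('b) \<ge> 3" and vv: "vv \<noteq> 0" "ein_form vv vv = 0"
    and vz: "ein_form vv z = 0" and z: "z \<in> ein_tilde"
    and W: "openin (top_of_set ein_tilde) W" "z \<in> W"
  shows "\<exists>N. openin (top_of_set ein_tilde) N \<and> z \<in> N \<and> N \<subseteq> W
           \<and> connected (N \<inter> {w \<in> ein_tilde. ein_form vv w > 0})"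
proof -
  define r where "r = sqrt (1/2::real)"
  have r: "r > 0" "r\<^sup>2 = 1/2" by (auto simp: r_def)
  define a where "a = ja vv"
  define b where "b = jb vv"
  define x0 where "x0 = ja z"
  define y0 where "y0 = jb z"
  define c where "c = norm a"
  have Eiff: "w \<in> ein_tilde \<longleftrightarrow> norm (ja w) = r \<and> norm (jb w) = r" for w
    unfolding r_def by (rule ein_tilde_iff)
  have ab2: "a \<bullet> a = b \<bullet> b" using vv(2) by (simp add: ein_form_split a_def b_def)
  have nb: "norm b = c" unfolding c_def using ab2 by (simp add: norm_eq_sqrt_inner)
  have c: "c > 0"
  proof (rule ccontr)
    assume "\<not> c > 0"
    then have "a = 0" "b = 0" using nb unfolding c_def by auto
    then have "vv = jn 0 0" unfolding a_def b_def by (metis jn_ja_jb)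
    moreover have "jn 0 0 = (0 :: real^('a+'b))" by (simp add: jn_def vec_eq_iff split: sum.split)
    ultimately show False using vv(1) by simp
  qed
  have na: "norm a = c" by (simp add: c_def)
  have nx0: "norm x0 = r" and ny0: "norm y0 = r" using z Eiff x0_def y0_def by auto
  have ab: "a \<bullet> x0 = b \<bullet> y0" using vz by (simp add: ein_form_split a_def b_def x0_def y0_def)
  obtain T where T: "open T" "W = ein_tilde \<inter> T" using W(1) by (auto simp: openin_open)
  obtain e where e: "e > 0" "ball z e \<subseteq> T" using T W(2) open_contains_ball by blast
  define s where "s = max (max 0 (r\<^sup>2 - e\<^sup>2/8)) (if \<bar>a \<bullet> x0\<bar> < r * c then (r / c) * \<bar>a \<bullet> x0\<bar> else 0)"
  have s0: "0 \<le> s" "r\<^sup>2 - e\<^sup>2/8 \<le> s" "\<bar>a \<bullet> x0\<bar> < r * c \<longrightarrow> (r / c) * \<bar>a \<bullet> x0\<bar> \<le> s"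
    unfolding s_def by auto
  have s1: "s < r\<^sup>2"
  proof -
    have h: "(r / c) * \<bar>a \<bullet> x0\<bar> < r\<^sup>2" if "\<bar>a \<bullet> x0\<bar> < r * c"
    proof -
      have "(r / c) * \<bar>a \<bullet> x0\<bar> < (r / c) * (r * c)" using that r c by (intro mult_strict_left_mono) auto
      also have "\<dots> = r\<^sup>2" using c by (simp add: power2_eq_square)
      finally show ?thesis .
    qed
    have pos: "0 < r\<^sup>2" using r(1) by simp
    have B: "(if \<bar>a \<bullet> x0\<bar> < r * c then (r / c) * \<bar>a \<bullet> x0\<bar> else 0) < r\<^sup>2"
    proof (cases "\<bar>a \<bullet> x0\<bar> < r * c")
      case True then show ?thesis using h[OF True] by (simp only: if_P)
    next
      case False then show ?thesis using pos by (simp only: if_not_P if_False)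
    qed
    have A: "max 0 (r\<^sup>2 - e\<^sup>2/8) < r\<^sup>2" using pos e by auto
    show ?thesis unfolding s_def using A B by (simp only: max_less_iff_conj)
  qed
  define N where "N = ein_tilde \<inter> ({w. jn x0 0 \<bullet> w > s} \<inter> {w. jn 0 y0 \<bullet> w > s})"
  have i1: "jn x0 0 \<bullet> w = x0 \<bullet> ja w" and i2: "jn 0 y0 \<bullet> w = y0 \<bullet> jb w" for w
    by (simp_all add: inner_split)
  have x0x0: "x0 \<bullet> x0 = r\<^sup>2" using nx0 by (simp add: dot_square_norm)
  have y0y0: "y0 \<bullet> y0 = r\<^sup>2" using ny0 by (simp add: dot_square_norm)
  show ?thesis
  proof (intro exI conjI)
    show "openin (top_of_set ein_tilde) N" unfolding N_def
      by (intro openin_open_Int open_Int open_halfspace_gt)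
    show "z \<in> N" unfolding N_def using z i1 i2 x0x0 y0y0 s1 by (simp add: x0_def y0_def)
    show "N \<subseteq> W"
    proof
      fix w assume w: "w \<in> N"
      then have nw: "norm (ja w) = r" "norm (jb w) = r" and xs: "x0 \<bullet> ja w > s" "y0 \<bullet> jb w > s"
        using Eiff i1 i2 unfolding N_def by auto
      have sq: "(norm (u - v))\<^sup>2 = u \<bullet> u - 2 * (u \<bullet> v) + v \<bullet> v" for u v :: "'c::real_inner"
        by (simp add: power2_norm_eq_inner inner_diff_left inner_diff_right inner_commute)
      have jw: "ja w \<bullet> ja w = r\<^sup>2" "jb w \<bullet> jb w = r\<^sup>2" using nw by (simp_all add: dot_square_norm)
      have "e\<^sup>2 > 0" using e by simp
      have "(norm (z - w))\<^sup>2 = (norm (x0 - ja w))\<^sup>2 + (norm (y0 - jb w))\<^sup>2"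
        by (simp add: norm_split ja_diff jb_diff x0_def y0_def)
      also have "\<dots> = (2 * r\<^sup>2 - 2 * (x0 \<bullet> ja w)) + (2 * r\<^sup>2 - 2 * (y0 \<bullet> jb w))"
        unfolding sq x0x0 y0y0 jw by simp
      finally have "(norm (z - w))\<^sup>2 < e\<^sup>2" using xs s0 e \<open>e\<^sup>2 > 0\<close> by linarith
      then have "norm (z - w) < e" using e by (simp add: power2_less_imp_less)
      then show "w \<in> W" using w e T unfolding N_def by (auto simp: dist_norm)
    qed
    have eqQ: "N \<inter> {w \<in> ein_tilde. ein_form vv w > 0} = (\<lambda>p. jn (fst p) (snd p)) ` QQ a b x0 y0 r s"
    proof
      show "N \<inter> {w \<in> ein_tilde. ein_form vv w > 0} \<subseteq> (\<lambda>p. jn (fst p) (snd p)) ` QQ a b x0 y0 r s"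
      proof
        fix w assume w: "w \<in> N \<inter> {w \<in> ein_tilde. ein_form vv w > 0}"
        then have "(ja w, jb w) \<in> QQ a b x0 y0 r s"
          using Eiff i1 i2 unfolding N_def QQ_def by (auto simp: ein_form_split a_def b_def)
        moreover have "w = (\<lambda>p. jn (fst p) (snd p)) (ja w, jb w)" by simp
        ultimately show "w \<in> (\<lambda>p. jn (fst p) (snd p)) ` QQ a b x0 y0 r s" by blast
      qed
      show "(\<lambda>p. jn (fst p) (snd p)) ` QQ a b x0 y0 r s \<subseteq> N \<inter> {w \<in> ein_tilde. ein_form vv w > 0}"
      proof clarify
        fix x y assume "(x, y) \<in> QQ a b x0 y0 r s"
        then have xy: "norm x = r" "x0 \<bullet> x > s" "norm y = r" "y0 \<bullet> y > s" "a \<bullet> x > b \<bullet> y"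
          unfolding QQ_def by auto
        have E: "jn x y \<in> ein_tilde" using Eiff[of "jn x y"] xy by simp
        show "jn (fst (x, y)) (snd (x, y)) \<in> N \<inter> {w \<in> ein_tilde. ein_form vv w > 0}"
          using E xy i1[of "jn x y"] i2[of "jn x y"] unfolding N_def by (simp add: ein_form_split a_def b_def)
      qed
    qed
    have "connected (QQ a b x0 y0 r s)"
      by (rule GC[OF r(1) c na nb nx0 ny0 ab s0(1) s1 s0(3)]) (use dims in auto)
    then show "connected (N \<inter> {w \<in> ein_tilde. ein_form vv w > 0})"
      unfolding eqQ by (rule connected_continuous_image[OF cont_jn])
  qed
qed

lemma ein_form_neg: "ein_form (- v) w = - ein_form v w"
  by (simp add: ein_form_split ja_neg jb_neg)

lemma cont_ein_form: "continuous_on S (\<lambda>w. ein_form v w)"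
  unfolding ein_form_inner by (intro continuous_intros)

lemma ein_lc:
  fixes v z :: "real^('a::finite+'b::finite)"
  assumes dims: "CARD('a) \<ge> 3" "CARD('b) \<ge> 3" and v: "v \<noteq> 0" "ein_form v v = 0"
    and P: "P \<in> components {w \<in> ein_tilde. ein_form v w \<noteq> 0}"
    and z: "z \<in> closure P - P" "z \<in> ein_tilde"
    and W: "openin (top_of_set ein_tilde) W" "z \<in> W"
  shows "\<exists>N. openin (top_of_set ein_tilde) N \<and> z \<in> N \<and> N \<subseteq> W \<and> connected (N \<inter> P)"
proof -
  define O' where "O' = {w \<in> ein_tilde. ein_form v w \<noteq> 0}"
  obtain w0 where w0: "w0 \<in> O'" "P = connected_component_set O' w0"
    using P unfolding components_iff O'_def by blast
  have vz: "ein_form v z = 0"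
  proof (rule ccontr)
    assume "ein_form v z \<noteq> 0"
    then have zO: "z \<in> O'" using z(2) by (simp add: O'_def)
    have "closedin (top_of_set O') P" unfolding w0(2) by (rule closedin_connected_component)
    then obtain T where T: "closed T" "P = O' \<inter> T" by (auto simp: closedin_closed)
    then have "closure P \<subseteq> T" by (intro closure_minimal) auto
    then show False using z(1) zO T(2) by auto
  qed
  have Pc: "connected P" unfolding w0(2) by (rule connected_connected_component)
  have PO: "P \<subseteq> O'" unfolding w0(2) by (rule connected_component_subset)
  have sign: "(\<forall>w\<in>P. ein_form v w > 0) \<or> (\<forall>w\<in>P. ein_form v w < 0)"
  proof (rule ccontr)
    assume "\<not> ?thesis"
    then obtain w1 w2 where w: "w1 \<in> P" "w2 \<in> P" "ein_form v w1 \<le> 0" "ein_form v w2 \<ge> 0" by force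
    have "connected ((\<lambda>w. ein_form v w) ` P)"
      by (rule connected_continuous_image[OF cont_ein_form Pc])
    then have "0 \<in> (\<lambda>w. ein_form v w) ` P"
      by (rule connectedD_interval) (use w in auto)
    then show False using PO unfolding O'_def by auto
  qed
  obtain vv where vv: "vv \<noteq> 0" "ein_form vv vv = 0" "ein_form vv z = 0"
    "P \<subseteq> {w \<in> ein_tilde. ein_form vv w > 0}" "{w \<in> ein_tilde. ein_form vv w \<noteq> 0} = O'"
  proof (cases "\<forall>w\<in>P. ein_form v w > 0")
    case True
    show ?thesis by (rule that[of v]) (use v vz True PO in \<open>auto simp: O'_def\<close>)
  next
    case False
    then have neg: "\<forall>w\<in>P. ein_form v w < 0" using sign by blast
    have vv2: "ein_form (- v) (- v) = 0" using v(2) by (simp add: ein_form_split ja_neg jb_neg)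
    show ?thesis by (rule that[of "- v"]) (use v vv2 vz neg PO in \<open>auto simp: O'_def ein_form_neg\<close>)
  qed
  obtain N where N: "openin (top_of_set ein_tilde) N" "z \<in> N" "N \<subseteq> W"
      "connected (N \<inter> {w \<in> ein_tilde. ein_form vv w > 0})"
    using ein_geo[OF dims vv(1,2,3) z(2) W] by blast
  let ?S = "{w \<in> ein_tilde. ein_form vv w > 0}"
  have "connected (N \<inter> P)"
  proof (cases "N \<inter> P = {}")
    case True then show ?thesis by simp
  next
    case False
    then obtain w1 where w1: "w1 \<in> N \<inter> P" by blast
    have SO: "N \<inter> ?S \<subseteq> O'" using vv(5) by auto
    have "N \<inter> ?S \<subseteq> connected_component_set O' w1"
      by (rule connected_component_maximal) (use w1 vv(4) N(4) SO in auto)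
    also have "connected_component_set O' w1 = P"
      using w1 w0(2) connected_component_eq by blast
    finally have "N \<inter> P = N \<inter> ?S" using vv(4) by blast
    then show ?thesis using N(4) by simp
  qed
  then show ?thesis using N by blast
qed

lemma ein_part:
  "\<forall>(Mt :: 'm topology) (M :: 'c topology) p (D :: 'm \<Rightarrow> real^('a::finite + 'b::finite)) V.
      CARD('a) \<ge> 3 \<and> CARD('b) \<ge> 3 \<and> dev_data Mt M p D ein_tilde ein_group \<and>
      max_chart Mt p D minkowski_patches V \<and> compactin Mt (Mt closure_of V) \<longrightarrow>
      (\<exists>V'. openin Mt V' \<and> Mt closure_of V \<subseteq> V' \<and> inj_on D V')"
proof (intro allI impI, elim conjE)
  fix Mt :: "'m topology" and M :: "'c topology" and p and D :: "'m \<Rightarrow> real^('a + 'b)" and V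
  assume dims: "CARD('a) \<ge> 3" "CARD('b) \<ge> 3"
    and dd: "dev_data Mt M p D ein_tilde ein_group" and mc: "max_chart Mt p D minkowski_patches V"
    and K: "compactin Mt (Mt closure_of V)"
  have Haus: "Hausdorff_space Mt" and lh: "local_homeo_map Mt (top_of_set ein_tilde) D"
    using dd by (auto simp: dev_data_def)
  have V: "openin Mt V" "inj_on D V" and mp: "D ` V \<in> minkowski_patches" using mc by (auto simp: max_chart_def)
  obtain v where v: "v \<noteq> 0" "ein_form v v = 0" and P: "D ` V \<in> components {w \<in> ein_tilde. ein_form v w \<noteq> 0}"
    using mp unfolding minkowski_patches_def by blast
  show "\<exists>V'. openin Mt V' \<and> Mt closure_of V \<subseteq> V' \<and> inj_on D V'"
  proof (rule abstract_main[OF Haus lh V K])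
    fix z W assume "z \<in> closure (D ` V) - D ` V" "z \<in> ein_tilde" "openin (top_of_set ein_tilde) W" "z \<in> W"
    then show "\<exists>N. openin (top_of_set ein_tilde) N \<and> z \<in> N \<and> N \<subseteq> W \<and> connected (N \<inter> D ` V)"
      using ein_lc[OF dims v P] by blast
  qed
qed

theorem lemma3p9:
  shows
  "(\<forall>(Mt :: 'm topology) (M :: 'c topology) p (D :: 'm \<Rightarrow> real^'n) V.
      CARD('n) \<ge> 3 \<and> dev_data Mt M p D (sphere 0 1) proj_group \<and>
      max_chart Mt p D hemispheres V \<and> compactin Mt (Mt closure_of V) \<longrightarrow>
      (\<exists>V'. openin Mt V' \<and> Mt closure_of V \<subseteq> V' \<and> inj_on D V'))
   \<and>
   (\<forall>(Mt :: 'm topology) (M :: 'c topology) p (D :: 'm \<Rightarrow> real^('a::finite + 'b::finite)) V.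
      CARD('a) \<ge> 3 \<and> CARD('b) \<ge> 3 \<and> dev_data Mt M p D ein_tilde ein_group \<and>
      max_chart Mt p D minkowski_patches V \<and> compactin Mt (Mt closure_of V) \<longrightarrow>
      (\<exists>V'. openin Mt V' \<and> Mt closure_of V \<subseteq> V' \<and> inj_on D V'))"
    using proj_part ein_part by blast

end
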